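(* Let $\mathcal M$ be an oriented matroid on $E$ and let $\mathcal S\subseteq 2^E$ be a maximal-by-size $\mathcal M$-separated collection. Then $\mathcal S$ is complete: for every circuit $Y=(Y^+,Y^-)$ of $\mathcal M$ there exists $S\in\mathcal S$ with either ($Y^+\subseteq S$ and $Y^-\cap S=\emptyset$) or ($Y^-\subseteq S$ and $Y^+\cap S=\emptyset$).
   Context: Oriented matroids are given by signed circuits $X=(X^+,X^-)$ on $E$. $I,J\subseteq E$ are $\mathcal M$-separated if no circuit $X$ satisfies $X^+\subseteq I\setminus J$, $X^-\subseteq J\setminus I$; a collection is $\mathcal M$-separated if pairwise so; maximal by size means of maximum cardinality among all $\mathcal M$-separated collections. *)

theory Defs
  imports Main
begin

text \<open>A signed set is a pair (X+, X-) of subsets of the ground set.\<close>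

type_synonym 'a signed_set = "'a set \<times> 'a set"

definition neg_sset :: "'a signed_set \<Rightarrow> 'a signed_set" where
  "neg_sset X = (snd X, fst X)"

definition supp :: "'a signed_set \<Rightarrow> 'a set" where
  "supp X = fst X \<union> snd X"

definition oriented_matroid :: "'a set \<Rightarrow> 'a signed_set set \<Rightarrow> bool" where
  "oriented_matroid E C \<longleftrightarrow>
     finite E \<and>
     (\<forall>X\<in>C. fst X \<inter> snd X = {} \<and> supp X \<subseteq> E) \<and>
     ({}, {}) \<notin> C \<and>
     (\<forall>X\<in>C. neg_sset X \<in> C) \<and>
     (\<forall>X\<in>C. \<forall>Y\<in>C. supp X \<subseteq> supp Y \<longrightarrow> X = Y \<or> X = neg_sset Y) \<and>
     (\<forall>X\<in>C. \<forall>Y\<in>C. \<forall>e. X \<noteq> neg_sset Y \<and> e \<in> fst X \<inter> snd Y \<longrightarrow>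
        (\<exists>Z\<in>C. fst Z \<subseteq> (fst X \<union> fst Y) - {e} \<and> snd Z \<subseteq> (snd X \<union> snd Y) - {e}))"

definition M_separated :: "'a signed_set set \<Rightarrow> 'a set \<Rightarrow> 'a set \<Rightarrow> bool" where
  "M_separated C I J \<longleftrightarrow> \<not> (\<exists>X\<in>C. fst X \<subseteq> I - J \<and> snd X \<subseteq> J - I)"

definition M_separated_collection :: "'a set \<Rightarrow> 'a signed_set set \<Rightarrow> 'a set set \<Rightarrow> bool" where
  "M_separated_collection E C S \<longleftrightarrow>
     S \<subseteq> Pow E \<and> (\<forall>I\<in>S. \<forall>J\<in>S. M_separated C I J)"

definition max_by_size_separated :: "'a set \<Rightarrow> 'a signed_set set \<Rightarrow> 'a set set \<Rightarrow> bool" where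
  "max_by_size_separated E C S \<longleftrightarrow>
     M_separated_collection E C S \<and>
     (\<forall>S'. M_separated_collection E C S' \<longrightarrow> card S' \<le> card S)"

end

theory Submission
  imports Defs
begin

lemma fst_neg[simp]: "fst (neg_sset X) = snd X" by (simp add: neg_sset_def)
lemma snd_neg[simp]: "snd (neg_sset X) = fst X" by (simp add: neg_sset_def)
lemma supp_neg[simp]: "supp (neg_sset X) = supp X" by (auto simp: supp_def)
lemma neg_neg[simp]: "neg_sset (neg_sset X) = X" by (simp add: neg_sset_def)

definition elimP :: "'a signed_set set \<Rightarrow> 'a signed_set \<Rightarrow> 'a signed_set \<Rightarrow> 'a \<Rightarrow> 'a \<Rightarrow> bool" where
  "elimP C X Y e f \<longleftrightarrow> (\<exists>Z\<in>C. f \<in> supp Z \<and> fst Z \<subseteq> (fst X \<union> fst Y) - {e} \<and> snd Z \<subseteq> (snd X \<union> snd Y) - {e})"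

definition goodf :: "'a signed_set \<Rightarrow> 'a signed_set \<Rightarrow> 'a \<Rightarrow> bool" where
  "goodf X Y f \<longleftrightarrow> f \<in> (fst X \<union> fst Y) - (snd X \<union> snd Y) \<or> f \<in> (snd X \<union> snd Y) - (fst X \<union> fst Y)"

definition QQ :: "'a signed_set set \<Rightarrow> nat \<Rightarrow> bool" where
  "QQ C n \<longleftrightarrow> (\<forall>X Y e f. X\<in>C \<longrightarrow> Y\<in>C \<longrightarrow> card (supp X \<union> supp Y) \<le> n \<longrightarrow> e \<in> fst X \<longrightarrow> e \<in> snd Y
      \<longrightarrow> goodf X Y f \<longrightarrow> elimP C X Y e f)"

lemma elimP_swap: "elimP C X Y e f = elimP C Y X e f"
  unfolding elimP_def by (simp add: Un_commute)
lemma goodf_swap: "goodf X Y f = goodf Y X f"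
  unfolding goodf_def by (auto)

lemma elimP_neg:
  assumes "\<forall>Z\<in>C. neg_sset Z \<in> C" "elimP C (neg_sset X) (neg_sset Y) e f"
  shows "elimP C X Y e f"
proof -
  from assms(2) obtain Z where Z: "Z \<in> C" "f \<in> supp Z" "fst Z \<subseteq> (snd X \<union> snd Y) - {e}" "snd Z \<subseteq> (fst X \<union> fst Y) - {e}"
    unfolding elimP_def by auto
  have "neg_sset Z \<in> C" using Z(1) assms(1) by blast
  moreover have "f \<in> supp (neg_sset Z)" using Z(2) by simp
  ultimately show ?thesis unfolding elimP_def using Z(3,4) by (intro bexI[of _ "neg_sset Z"]) simp_all
qed

lemma elim2:
  assumes "QQ C n" "W \<in> C" "Z \<in> C" "card (supp W \<union> supp Z) \<le> n"
    "x \<in> fst W \<inter> snd Z \<or> x \<in> snd W \<inter> fst Z" "goodf W Z f"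
  shows "elimP C W Z x f"
proof (cases "x \<in> fst W \<inter> snd Z")
  case True thus ?thesis using assms unfolding QQ_def by blast
next
  case False
  hence "x \<in> fst Z \<inter> snd W" using assms(5) by auto
  moreover have "card (supp Z \<union> supp W) \<le> n" using assms(4) by (simp add: Un_commute)
  moreover have "goodf Z W f" using assms(6) goodf_swap by metis
  ultimately have "elimP C Z W x f" using assms(1,2,3) unfolding QQ_def by blast
  thus ?thesis by (simp add: elimP_swap)
qed

context
  fixes E :: "'a set" and C :: "'a signed_set set"
  assumes OM: "oriented_matroid E C"
begin

lemma om_fin: "finite E" using OM by (simp add: oriented_matroid_def)
lemma om_disj: "X \<in> C \<Longrightarrow> fst X \<inter> snd X = {}" using OM by (simp add: oriented_matroid_def)
lemma om_supp: "X \<in> C \<Longrightarrow> supp X \<subseteq> E" using OM by (simp add: oriented_matroid_def)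
lemma om_ne: "X \<in> C \<Longrightarrow> supp X \<noteq> {}"
proof
  assume "X \<in> C" "supp X = {}"
  hence "X = ({},{})" by (cases X) (auto simp: supp_def)
  thus False using \<open>X \<in> C\<close> OM by (simp add: oriented_matroid_def)
qed
lemma om_neg: "X \<in> C \<Longrightarrow> neg_sset X \<in> C" using OM by (simp add: oriented_matroid_def)
lemma om_inc: "X\<in>C \<Longrightarrow> Y\<in>C \<Longrightarrow> supp X \<subseteq> supp Y \<Longrightarrow> X = Y \<or> X = neg_sset Y"
  using OM by (simp add: oriented_matroid_def)
lemma om_weak: "X\<in>C \<Longrightarrow> Y\<in>C \<Longrightarrow> X \<noteq> neg_sset Y \<Longrightarrow> e \<in> fst X \<Longrightarrow> e \<in> snd Y \<Longrightarrow>
   \<exists>Z\<in>C. fst Z \<subseteq> (fst X \<union> fst Y) - {e} \<and> snd Z \<subseteq> (snd X \<union> snd Y) - {e}"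
  using OM unfolding oriented_matroid_def by blast
lemma om_finsupp: "X \<in> C \<Longrightarrow> finite (supp X)" using om_supp om_fin finite_subset by blast

lemma sub:
  assumes Q: "QQ C n" and XC: "X \<in> C" and YC: "Y \<in> C" and Z0C: "Z0 \<in> C"
    and cardU: "card (supp X \<union> supp Y) \<le> Suc n" and eX: "e \<in> supp X"
    and Z0: "fst Z0 \<subseteq> fst X \<union> fst Y" "snd Z0 \<subseteq> snd X \<union> snd Y" "e \<notin> supp Z0" "f \<notin> supp Z0"
  shows "W \<in> C \<Longrightarrow> f \<in> supp W \<Longrightarrow> e \<notin> supp W \<Longrightarrow> supp W \<subseteq> supp X \<union> supp Y \<Longrightarrow>
     fst W \<subseteq> fst X \<union> fst Y \<union> snd Z0 \<Longrightarrow> snd W \<subseteq> snd X \<union> snd Y \<union> fst Z0 \<Longrightarrow> elimP C X Y e f"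
proof (induction "card ((fst W - (fst X \<union> fst Y)) \<union> (snd W - (snd X \<union> snd Y)))" arbitrary: W rule: less_induct)
  case less
  define B where "B = (fst W - (fst X \<union> fst Y)) \<union> (snd W - (snd X \<union> snd Y))"
  have finU: "finite (supp X \<union> supp Y)" using om_finsupp XC YC by blast
  show ?case
  proof (cases "B = {}")
    case True
    thus ?thesis unfolding elimP_def using less.prems B_def
      by (intro bexI[of _ W]) (auto simp: supp_def)
  next
    case False
    then obtain x where xB: "x \<in> B" by blast
    have x: "x \<in> fst W \<inter> snd Z0 \<or> x \<in> snd W \<inter> fst Z0" using xB less.prems unfolding B_def by auto
    have gf: "goodf W Z0 f" using less.prems Z0 om_disj[OF less.prems(1)] unfolding goodf_def supp_def by auto
    have sZ0: "supp Z0 \<subseteq> supp X \<union> supp Y" using Z0 by (auto simp: supp_def)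
    have "supp W \<union> supp Z0 \<subseteq> (supp X \<union> supp Y) - {e}" using less.prems sZ0 Z0 by auto
    hence "card (supp W \<union> supp Z0) \<le> card ((supp X \<union> supp Y) - {e})" using finU by (intro card_mono) auto
    also have "\<dots> \<le> n" using cardU eX finU by (simp add: card_Diff_singleton)
    finally have cW: "card (supp W \<union> supp Z0) \<le> n" .
    from elim2[OF Q less.prems(1) Z0C cW x gf] obtain W2 where W2: "W2 \<in> C" "f \<in> supp W2"
      "fst W2 \<subseteq> (fst W \<union> fst Z0) - {x}" "snd W2 \<subseteq> (snd W \<union> snd Z0) - {x}"
      unfolding elimP_def by blast
    define B2 where "B2 = (fst W2 - (fst X \<union> fst Y)) \<union> (snd W2 - (snd X \<union> snd Y))"
    have "B2 \<subseteq> B - {x}" using W2 Z0 unfolding B2_def B_def by auto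
    moreover have "finite B" unfolding B_def using om_finsupp[OF less.prems(1)] 
      by (rule finite_subset[rotated]) (auto simp: supp_def)
    ultimately have "card B2 \<le> card (B - {x})" by (intro card_mono) auto
    also have "\<dots> < card B" using xB \<open>finite B\<close> by (intro card_Diff1_less)
    finally have "card B2 < card B" .
    have h1: "e \<notin> supp W2" using W2(3,4) less.prems(3) Z0(3) by (auto simp: supp_def)
    have h2: "supp W2 \<subseteq> supp X \<union> supp Y" using W2(3,4) less.prems(4) sZ0 by (auto simp: supp_def)
    have h3: "fst W2 \<subseteq> fst X \<union> fst Y \<union> snd Z0" using W2(3) less.prems(5) Z0(1) by auto
    have h4: "snd W2 \<subseteq> snd X \<union> snd Y \<union> fst Z0" using W2(4) less.prems(6) Z0(2) by auto
    show ?thesis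
      using less.hyps[of W2] \<open>card B2 < card B\<close> W2(1,2) h1 h2 h3 h4 unfolding B2_def B_def by blast
  qed
qed


lemma finU: "X \<in> C \<Longrightarrow> Y \<in> C \<Longrightarrow> finite (supp X \<union> supp Y)" using om_finsupp by blast

lemma card_less_aux:
  assumes "finite U" "card U \<le> Suc n" "A \<subseteq> U - {a}" "a \<in> U"
  shows "card A \<le> n"
proof -
  have "card A \<le> card (U - {a})" using assms by (intro card_mono) auto
  also have "\<dots> \<le> n" using assms by (simp add: card_Diff_singleton)
  finally show ?thesis .
qed

lemma Z0_not_sub:
  assumes "X \<in> C" "Z0 \<in> C" "e \<in> supp X" "e \<notin> supp Z0"
  obtains g where "g \<in> supp Z0" "g \<notin> supp X"
proof -
  have "\<not> supp Z0 \<subseteq> supp X"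
  proof
    assume "supp Z0 \<subseteq> supp X"
    hence "Z0 = X \<or> Z0 = neg_sset X" using om_inc assms by blast
    thus False using assms by auto
  qed
  thus ?thesis using that by blast
qed

lemma caseA:
  assumes Q: "QQ C n" and XC: "X \<in> C" and YC: "Y \<in> C" and card: "card (supp X \<union> supp Y) \<le> Suc n"
    and e: "e \<in> fst X" "e \<in> snd Y" and f: "f \<in> supp X" "f \<notin> supp Y"
  shows "elimP C X Y e f"
proof -
  have neq: "X \<noteq> neg_sset Y" using f by auto
  obtain Z0 where Z0: "Z0 \<in> C" "fst Z0 \<subseteq> (fst X \<union> fst Y) - {e}" "snd Z0 \<subseteq> (snd X \<union> snd Y) - {e}"
    using om_weak[OF XC YC neq e] by blast
  show ?thesis
  proof (cases "f \<in> supp Z0")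
    case True thus ?thesis unfolding elimP_def using Z0 by blast
  next
    case False
    have eZ0: "e \<notin> supp Z0" using Z0 by (auto simp: supp_def)
    have eX: "e \<in> supp X" using e by (simp add: supp_def)
    obtain g where g: "g \<in> supp Z0" "g \<notin> supp X" using Z0_not_sub[OF XC Z0(1) eX eZ0] by blast
    have gY: "g \<in> fst Y \<inter> snd (neg_sset Z0) \<or> g \<in> snd Y \<inter> fst (neg_sset Z0)"
      using g Z0 by (auto simp: supp_def)
    have dY: "fst Y \<inter> snd Y = {}" using om_disj YC by blast
    have gf1: "goodf Y (neg_sset Z0) e" using e eZ0 dY unfolding goodf_def supp_def by auto
    have sZ0: "supp Z0 \<subseteq> supp X \<union> supp Y" using Z0 by (auto simp: supp_def)
    have c1: "card (supp Y \<union> supp (neg_sset Z0)) \<le> n"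
      using card_less_aux[OF finU[OF XC YC] card, of "supp Y \<union> supp Z0" f] f False sZ0 by auto
    obtain Y1 where Y1: "Y1 \<in> C" "e \<in> supp Y1" "fst Y1 \<subseteq> (fst Y \<union> snd Z0) - {g}" "snd Y1 \<subseteq> (snd Y \<union> fst Z0) - {g}"
      using elim2[OF Q YC om_neg[OF Z0(1)] c1 gY gf1] unfolding elimP_def by auto
    have eY1: "e \<in> snd Y1" using Y1 eZ0 e dY by (auto simp: supp_def)
    have c2: "card (supp X \<union> supp Y1) \<le> n"
      using card_less_aux[OF finU[OF XC YC] card, of "supp X \<union> supp Y1" g] g Y1 sZ0 by (auto simp: supp_def)
    have dX: "fst X \<inter> snd X = {}" using om_disj XC by blast
    have gf2: "goodf X Y1 f" using f False Y1 dX unfolding goodf_def supp_def by auto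
    obtain W where W: "W \<in> C" "f \<in> supp W" "fst W \<subseteq> (fst X \<union> fst Y1) - {e}" "snd W \<subseteq> (snd X \<union> snd Y1) - {e}"
      using Q XC Y1(1) c2 e(1) eY1 gf2 unfolding QQ_def elimP_def by blast
    show ?thesis
      apply (rule sub[OF Q XC YC Z0(1) card eX _ _ eZ0 False W(1,2)])
      using Z0 W Y1 by (auto simp: supp_def)
  qed
qed

lemma caseA':
  assumes Q: "QQ C n" and AC: "A \<in> C" and BC: "B \<in> C" and card: "card (supp A \<union> supp B) \<le> Suc n"
    and x: "x \<in> fst A \<inter> snd B \<or> x \<in> snd A \<inter> fst B" and f: "f \<in> supp A" "f \<notin> supp B"
  shows "elimP C A B x f"
proof (cases "x \<in> fst A \<inter> snd B")
  case True
  hence x1: "x \<in> fst A" "x \<in> snd B" by auto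
  show ?thesis by (rule caseA[OF Q AC BC card x1 f])
next
  case False
  hence x2: "x \<in> fst (neg_sset A)" "x \<in> snd (neg_sset B)" using x by auto
  have c2: "card (supp (neg_sset A) \<union> supp (neg_sset B)) \<le> Suc n" using card by simp
  have f2: "f \<in> supp (neg_sset A)" "f \<notin> supp (neg_sset B)" using f by simp_all
  have E: "elimP C (neg_sset A) (neg_sset B) x f"
    by (rule caseA[OF Q om_neg[OF AC] om_neg[OF BC] c2 x2 f2])
  have NC: "\<forall>Z\<in>C. neg_sset Z \<in> C" using om_neg by blast
  show ?thesis by (rule elimP_neg[OF NC E])
qed

lemma caseB:
  assumes Q: "QQ C n" and XC: "X \<in> C" and YC: "Y \<in> C" and card: "card (supp X \<union> supp Y) \<le> Suc n"
    and e: "e \<in> fst X" "e \<in> snd Y" and f: "f \<in> supp X" "f \<in> supp Y" and gf: "goodf X Y f"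
  shows "elimP C X Y e f"
proof -
  have neq: "X \<noteq> neg_sset Y" using gf unfolding goodf_def by auto
  obtain Z0 where Z0: "Z0 \<in> C" "fst Z0 \<subseteq> (fst X \<union> fst Y) - {e}" "snd Z0 \<subseteq> (snd X \<union> snd Y) - {e}"
    using om_weak[OF XC YC neq e] by blast
  show ?thesis
  proof (cases "f \<in> supp Z0")
    case True thus ?thesis unfolding elimP_def using Z0 by blast
  next
    case False
    have eZ0: "e \<notin> supp Z0" using Z0 by (auto simp: supp_def)
    have eX: "e \<in> supp X" using e by (simp add: supp_def)
    obtain g where g: "g \<in> supp Z0" "g \<notin> supp X" using Z0_not_sub[OF XC Z0(1) eX eZ0] by blast
    have gY: "g \<in> fst Y \<inter> snd (neg_sset Z0) \<or> g \<in> snd Y \<inter> fst (neg_sset Z0)"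
      using g Z0 by (auto simp: supp_def)
    have dY: "fst Y \<inter> snd Y = {}" using om_disj YC by blast
    have dX: "fst X \<inter> snd X = {}" using om_disj XC by blast
    have sZ0: "supp Z0 \<subseteq> supp X \<union> supp Y" using Z0 by (auto simp: supp_def)
    have c1: "card (supp Y \<union> supp (neg_sset Z0)) \<le> Suc n"
      using card_mono[OF finU[OF XC YC], of "supp Y \<union> supp Z0"] sZ0 card by auto
    have fYZ: "f \<in> supp Y" "f \<notin> supp (neg_sset Z0)" using f(2) False by simp_all
    have EY: "elimP C Y (neg_sset Z0) g f" by (rule caseA'[OF Q YC om_neg[OF Z0(1)] c1 gY fYZ])
    have "\<exists>Z\<in>C. f \<in> supp Z \<and> fst Z \<subseteq> (fst Y \<union> snd Z0) - {g} \<and> snd Z \<subseteq> (snd Y \<union> fst Z0) - {g}"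
      using EY unfolding elimP_def by simp
    then obtain Y2 where Y2: "Y2 \<in> C" "f \<in> supp Y2" "fst Y2 \<subseteq> (fst Y \<union> snd Z0) - {g}" "snd Y2 \<subseteq> (snd Y \<union> fst Z0) - {g}"
      by blast
    show ?thesis
    proof (cases "e \<in> supp Y2")
      case False2: False
      show ?thesis
        apply (rule sub[OF Q XC YC Z0(1) card eX _ _ eZ0 False Y2(1,2) False2])
        using Z0 Y2 by (auto simp: supp_def)
    next
      case True
      have eY2: "e \<in> snd Y2" using True Y2 eZ0 e dY by (auto simp: supp_def)
      have c2: "card (supp X \<union> supp Y2) \<le> n"
        using card_less_aux[OF finU[OF XC YC] card, of "supp X \<union> supp Y2" g] g Y2 sZ0 by (auto simp: supp_def)
      have gf2: "goodf X Y2 f" using gf f False Y2 dX dY unfolding goodf_def supp_def by auto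
      obtain W where W: "W \<in> C" "f \<in> supp W" "fst W \<subseteq> (fst X \<union> fst Y2) - {e}" "snd W \<subseteq> (snd X \<union> snd Y2) - {e}"
        using Q XC Y2(1) c2 e(1) eY2 gf2 unfolding QQ_def elimP_def by blast
      show ?thesis
        apply (rule sub[OF Q XC YC Z0(1) card eX _ _ eZ0 False W(1,2)])
        using Z0 W Y2 by (auto simp: supp_def)
    qed
  qed
qed

lemma QQ_step:
  assumes Q: "QQ C n" shows "QQ C (Suc n)"
  unfolding QQ_def
proof (intro allI impI)
  fix X Y e f assume XC: "X \<in> C" and YC: "Y \<in> C" and card: "card (supp X \<union> supp Y) \<le> Suc n"
    and e: "e \<in> fst X" "e \<in> snd Y" and gf: "goodf X Y f"
  have main: "elimP C A B e f" if AC: "A \<in> C" "B \<in> C" "card (supp A \<union> supp B) \<le> Suc n"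
    "e \<in> fst A" "e \<in> snd B" "goodf A B f" "f \<in> supp A" for A B
  proof (cases "f \<in> supp B")
    case True show ?thesis by (rule caseB[OF Q that(1,2,3,4,5,7) True that(6)])
  next
    case False show ?thesis by (rule caseA[OF Q that(1,2,3,4,5,7) False])
  qed
  show "elimP C X Y e f"
  proof (cases "f \<in> supp X")
    case True show ?thesis by (rule main[OF XC YC card e gf True])
  next
    case False
    have fY: "f \<in> supp (neg_sset Y)" using gf False unfolding goodf_def supp_def by auto
    have gf': "goodf (neg_sset Y) (neg_sset X) f" using gf unfolding goodf_def by auto
    have c': "card (supp (neg_sset Y) \<union> supp (neg_sset X)) \<le> Suc n" using card by (simp add: Un_commute)
    have e': "e \<in> fst (neg_sset Y)" "e \<in> snd (neg_sset X)" using e by simp_all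
    have "elimP C (neg_sset Y) (neg_sset X) e f"
      by (rule main[OF om_neg[OF YC] om_neg[OF XC] c' e' gf' fY])
    hence "elimP C (neg_sset X) (neg_sset Y) e f" by (simp add: elimP_swap)
    moreover have NC: "\<forall>Z\<in>C. neg_sset Z \<in> C" using om_neg by blast
    ultimately show ?thesis using elimP_neg[OF NC] by blast
  qed
qed

lemma QQ_all: "QQ C n"
proof (induction n)
  case 0
  show ?case unfolding QQ_def
  proof (intro allI impI)
    fix X Y e f assume "X \<in> C" "Y \<in> C" "card (supp X \<union> supp Y) \<le> 0" "e \<in> fst X"
    moreover have "finite (supp X \<union> supp Y)" using finU calculation by blast
    ultimately have "supp X \<union> supp Y = {}" by simp
    thus "elimP C X Y e f" using \<open>e \<in> fst X\<close> by (simp add: supp_def)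
  qed
next
  case (Suc n) thus ?case using QQ_step by blast
qed

lemma strong_elim:
  assumes "X \<in> C" "Y \<in> C" "e \<in> fst X" "e \<in> snd Y" "goodf X Y f"
  shows "elimP C X Y e f"
  using QQ_all[of "card (supp X \<union> supp Y)"] assms unfolding QQ_def by blast

end

definition Kcl :: "'a set \<Rightarrow> 'a signed_set set \<Rightarrow> bool" where
  "Kcl E C \<longleftrightarrow> finite E \<and> (\<forall>X\<in>C. fst X \<inter> snd X = {} \<and> supp X \<subseteq> E \<and> supp X \<noteq> {})
     \<and> (\<forall>X\<in>C. neg_sset X \<in> C)
     \<and> (\<forall>X\<in>C. \<forall>Y\<in>C. \<forall>e f. e \<in> fst X \<longrightarrow> e \<in> snd Y \<longrightarrow> goodf X Y f \<longrightarrow> elimP C X Y e f)"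

definition conf :: "'a signed_set \<Rightarrow> 'a set \<Rightarrow> bool" where
  "conf X T \<longleftrightarrow> fst X \<subseteq> T \<and> snd X \<inter> T = {}"

definition goodr :: "('a \<Rightarrow> nat) \<Rightarrow> 'a signed_set \<Rightarrow> bool" where
  "goodr r X \<longleftrightarrow> (\<exists>x\<in>fst X. \<forall>y\<in>snd X. r x < r y)"

definition Slex :: "('a \<Rightarrow> nat) \<Rightarrow> 'a set \<Rightarrow> 'a signed_set set \<Rightarrow> 'a set set" where
  "Slex r E C = {T. T \<subseteq> E \<and> (\<forall>X\<in>C. conf X T \<longrightarrow> goodr r X)}"

definition delC :: "'a \<Rightarrow> 'a signed_set set \<Rightarrow> 'a signed_set set" where
  "delC e C = {X\<in>C. e \<notin> supp X}"

definition conC :: "'a \<Rightarrow> 'a signed_set set \<Rightarrow> 'a signed_set set" where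
  "conC e C = (\<lambda>X. (fst X - {e}, snd X - {e})) ` {X\<in>C. supp X \<noteq> {e}}"

lemma OM_K: assumes "oriented_matroid E C" shows "Kcl E C"
  unfolding Kcl_def using om_fin[OF assms] om_disj[OF assms] om_supp[OF assms] om_ne[OF assms]
    om_neg[OF assms] strong_elim[OF assms] by blast

lemma K_fin: "Kcl E C \<Longrightarrow> finite E" by (simp add: Kcl_def)
lemma K_disj: "Kcl E C \<Longrightarrow> X \<in> C \<Longrightarrow> fst X \<inter> snd X = {}" by (simp add: Kcl_def)
lemma K_supp: "Kcl E C \<Longrightarrow> X \<in> C \<Longrightarrow> supp X \<subseteq> E" by (simp add: Kcl_def)
lemma K_ne: "Kcl E C \<Longrightarrow> X \<in> C \<Longrightarrow> supp X \<noteq> {}" by (simp add: Kcl_def)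
lemma K_neg: "Kcl E C \<Longrightarrow> X \<in> C \<Longrightarrow> neg_sset X \<in> C" by (simp add: Kcl_def)
lemma K_elim: "Kcl E C \<Longrightarrow> X \<in> C \<Longrightarrow> Y \<in> C \<Longrightarrow> e \<in> fst X \<Longrightarrow> e \<in> snd Y \<Longrightarrow> goodf X Y f \<Longrightarrow>
   \<exists>Z\<in>C. f \<in> supp Z \<and> fst Z \<subseteq> (fst X \<union> fst Y) - {e} \<and> snd Z \<subseteq> (snd X \<union> snd Y) - {e}"
  unfolding Kcl_def elimP_def by blast

lemma K_del: assumes K: "Kcl E C" shows "Kcl (E - {e}) (delC e C)"
proof -
  have A: "\<forall>X\<in>delC e C. fst X \<inter> snd X = {} \<and> supp X \<subseteq> E - {e} \<and> supp X \<noteq> {}"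
    using K_disj[OF K] K_supp[OF K] K_ne[OF K] unfolding delC_def by blast
  have B: "\<forall>X\<in>delC e C. neg_sset X \<in> delC e C" using K_neg[OF K] unfolding delC_def by simp
  have C: "elimP (delC e C) X Y x f" if h: "X \<in> delC e C" "Y \<in> delC e C" "x \<in> fst X" "x \<in> snd Y" "goodf X Y f" for X Y x f
  proof -
    obtain Z where Z: "Z \<in> C" "f \<in> supp Z" "fst Z \<subseteq> (fst X \<union> fst Y) - {x}" "snd Z \<subseteq> (snd X \<union> snd Y) - {x}"
      using K_elim[OF K, of X Y x f] h unfolding delC_def by blast
    have "Z \<in> delC e C" using Z h unfolding delC_def supp_def by auto
    thus ?thesis unfolding elimP_def using Z by blast
  qed
  show ?thesis unfolding Kcl_def using K_fin[OF K] A B C by blast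
qed

lemma K_con: assumes K: "Kcl E C" shows "Kcl (E - {e}) (conC e C)"
proof -
  have A: "fst X' \<inter> snd X' = {} \<and> supp X' \<subseteq> E - {e} \<and> supp X' \<noteq> {}" if h: "X' \<in> conC e C" for X'
  proof -
    obtain X where X: "X \<in> C" "supp X \<noteq> {e}" "X' = (fst X - {e}, snd X - {e})"
      using h unfolding conC_def by blast
    have "supp X \<noteq> {}" "supp X \<subseteq> E" "fst X \<inter> snd X = {}" using K_ne[OF K X(1)] K_supp[OF K X(1)] K_disj[OF K X(1)] by auto
    thus ?thesis using X(2,3) by (auto simp: supp_def)
  qed
  have B: "neg_sset X' \<in> conC e C" if h: "X' \<in> conC e C" for X'
  proof -
    obtain X where X: "X \<in> C" "supp X \<noteq> {e}" "X' = (fst X - {e}, snd X - {e})"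
      using h unfolding conC_def by blast
    have "neg_sset X \<in> C" using K_neg[OF K X(1)] .
    moreover have "supp (neg_sset X) \<noteq> {e}" using X(2) by simp
    moreover have "neg_sset X' = (fst (neg_sset X) - {e}, snd (neg_sset X) - {e})" using X(3) by (simp add: neg_sset_def)
    ultimately show ?thesis unfolding conC_def by blast
  qed
  have C: "elimP (conC e C) X' Y' x f" if h: "X' \<in> conC e C" "Y' \<in> conC e C" "x \<in> fst X'" "x \<in> snd Y'" "goodf X' Y' f" for X' Y' x f
  proof -
    obtain X where X: "X \<in> C" "supp X \<noteq> {e}" "X' = (fst X - {e}, snd X - {e})"
      using h(1) unfolding conC_def by blast
    obtain Y where Y: "Y \<in> C" "supp Y \<noteq> {e}" "Y' = (fst Y - {e}, snd Y - {e})"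
      using h(2) unfolding conC_def by blast
    have x: "x \<in> fst X" "x \<in> snd Y" "x \<noteq> e" using h(3,4) X Y by auto
    have gf: "goodf X Y f" "f \<noteq> e" using h(5) X(3) Y(3) unfolding goodf_def by auto
    obtain Z where Z: "Z \<in> C" "f \<in> supp Z" "fst Z \<subseteq> (fst X \<union> fst Y) - {x}" "snd Z \<subseteq> (snd X \<union> snd Y) - {x}"
      using K_elim[OF K X(1) Y(1) x(1,2) gf(1)] by blast
    have "supp Z \<noteq> {e}" using Z(2) gf(2) by auto
    hence "(fst Z - {e}, snd Z - {e}) \<in> conC e C" using Z(1) unfolding conC_def by blast
    moreover have "f \<in> supp (fst Z - {e}, snd Z - {e})" using Z(2) gf(2) by (auto simp: supp_def)
    ultimately show ?thesis unfolding elimP_def using Z X(3) Y(3) by (intro bexI[of _ "(fst Z - {e}, snd Z - {e})"]) auto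
  qed
  show ?thesis unfolding Kcl_def using K_fin[OF K] A B C by blast
qed

lemma ex_rmin: "finite U \<Longrightarrow> U \<noteq> {} \<Longrightarrow> \<exists>d\<in>U. \<forall>u\<in>U. r d \<le> (r u :: nat)"
proof -
  assume "finite U" "U \<noteq> {}"
  hence "Min (r ` U) \<in> r ` U" by simp
  then obtain d where "d \<in> U" "r d = Min (r ` U)" by auto
  moreover have "\<forall>u\<in>U. Min (r ` U) \<le> r u" using \<open>finite U\<close> by simp
  ultimately show ?thesis by metis
qed

lemma Slex_sep:
  assumes K: "Kcl E C" shows "M_separated_collection E C (Slex r E C)"
  unfolding M_separated_collection_def
proof (intro conjI ballI)
  show "Slex r E C \<subseteq> Pow E" unfolding Slex_def by auto
next
  fix I J assume I: "I \<in> Slex r E C" and J: "J \<in> Slex r E C"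
  show "M_separated C I J" unfolding M_separated_def
  proof
    assume "\<exists>X\<in>C. fst X \<subseteq> I - J \<and> snd X \<subseteq> J - I"
    then obtain X where X: "X \<in> C" "fst X \<subseteq> I - J" "snd X \<subseteq> J - I" by blast
    have "conf X I" using X unfolding conf_def by auto
    hence "goodr r X" using I X(1) unfolding Slex_def by blast
    then obtain x where x: "x \<in> fst X" "\<forall>y\<in>snd X. r x < r y" unfolding goodr_def by blast
    have "conf (neg_sset X) J" using X unfolding conf_def by auto
    hence "goodr r (neg_sset X)" using J K_neg[OF K X(1)] unfolding Slex_def by blast
    then obtain y where y: "y \<in> snd X" "\<forall>z\<in>fst X. r y < r z" unfolding goodr_def by auto
    show False using x y by force
  qed
qed

context
  fixes E :: "'a set" and C :: "'a signed_set set" and r :: "'a \<Rightarrow> nat" and e :: 'a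
  assumes K: "Kcl E C" and inj: "inj_on r E" and eE: "e \<in> E" and emax: "\<forall>y\<in>E - {e}. r y < r e"
begin

lemma del_sub: assumes "T \<in> Slex r E C" shows "T - {e} \<in> Slex r (E - {e}) (delC e C)"
  unfolding Slex_def
proof (intro CollectI conjI ballI impI)
  show "T - {e} \<subseteq> E - {e}" using assms unfolding Slex_def by auto
next
  fix X assume "X \<in> delC e C" "conf X (T - {e})"
  hence "X \<in> C" "conf X T" unfolding delC_def conf_def supp_def by auto
  thus "goodr r X" using assms unfolding Slex_def by blast
qed

lemma ins_mem:
  assumes TD: "T \<in> Slex r (E - {e}) (delC e C)" and nA: "T \<notin> Slex r E C"
  shows "insert e T \<in> Slex r E C"
proof (rule ccontr)
  assume nI: "insert e T \<notin> Slex r E C"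
  have TE: "T \<subseteq> E - {e}" using TD unfolding Slex_def by blast
  have gD: "\<And>W. W \<in> C \<Longrightarrow> e \<notin> supp W \<Longrightarrow> conf W T \<Longrightarrow> goodr r W"
    using TD unfolding Slex_def delC_def by blast
  obtain Z where Z: "Z \<in> C" "conf Z (insert e T)" "\<not> goodr r Z" using nI TE eE unfolding Slex_def by blast
  obtain X where X: "X \<in> C" "conf X T" "\<not> goodr r X" using nA TE unfolding Slex_def by blast
  have eX: "e \<in> snd X"
  proof (rule ccontr)
    assume "e \<notin> snd X"
    moreover have "e \<notin> fst X" using X(2) TE unfolding conf_def by auto
    ultimately show False using gD[OF X(1) _ X(2)] X(3) by (auto simp: supp_def)
  qed
  have eZ: "e \<in> fst Z"
  proof (rule ccontr)
    assume a: "e \<notin> fst Z"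
    have "e \<notin> snd Z" using Z(2) unfolding conf_def by auto
    moreover have "conf Z T" using Z(2) a unfolding conf_def by auto
    ultimately show False using gD[OF Z(1)] Z(3) a by (auto simp: supp_def)
  qed
  define U where "U = (supp X \<union> supp Z) - {e}"
  have UE: "U \<subseteq> E - {e}" using K_supp[OF K X(1)] K_supp[OF K Z(1)] unfolding U_def by auto
  have finU: "finite U" using UE K_fin[OF K] finite_subset by blast
  have dZ: "fst Z \<inter> snd Z = {}" and dX: "fst X \<inter> snd X = {}" using K_disj[OF K] X(1) Z(1) by auto
  have Une: "U \<noteq> {}"
  proof
    assume "U = {}"
    hence "snd Z = {}" using Z(2) unfolding U_def conf_def supp_def by auto
    thus False using Z(3) eZ unfolding goodr_def by auto
  qed
  obtain d where d: "d \<in> U" "\<forall>u\<in>U. r d \<le> r u" using ex_rmin[OF finU Une] by blast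
  have notpos: False if W: "W \<in> C" "\<not> goodr r W" "d \<in> fst W" "W = X \<or> W = Z" for W
  proof -
    obtain y where y: "y \<in> snd W" "r y \<le> r d" using W unfolding goodr_def by (auto simp: not_less)
    have dE: "d \<in> E - {e}" using d UE by auto
    have "y \<noteq> e"
    proof
      assume "y = e" hence "r e \<le> r d" using y by simp
      moreover have "r d < r e" using emax dE by blast
      ultimately show False by simp
    qed
    hence "y \<in> U" using y W unfolding U_def supp_def by auto
    hence "r y = r d" using d y by force
    hence "y = d" using inj \<open>y \<in> U\<close> dE UE unfolding inj_on_def by blast
    thus False using y W dX dZ by auto
  qed
  have dn: "d \<notin> fst X" "d \<notin> fst Z" using notpos X Z by blast+
  have dneg: "d \<in> snd X \<union> snd Z" using d dn unfolding U_def supp_def by auto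
  have gf: "goodf Z X d" using dn dneg unfolding goodf_def by auto
  obtain W where W: "W \<in> C" "d \<in> supp W" "fst W \<subseteq> (fst Z \<union> fst X) - {e}" "snd W \<subseteq> (snd Z \<union> snd X) - {e}"
    using K_elim[OF K Z(1) X(1) eZ eX gf] by blast
  have "conf W T" using W X(2) Z(2) unfolding conf_def by auto
  moreover have "e \<notin> supp W" using W by (auto simp: supp_def)
  ultimately have "goodr r W" using gD W(1) by blast
  then obtain x where x: "x \<in> fst W" "\<forall>y\<in>snd W. r x < r y" unfolding goodr_def by blast
  have "d \<in> snd W" using W(2,3) dn unfolding supp_def by auto
  hence "r x < r d" using x by blast
  moreover have "x \<in> U" using x W(3) unfolding U_def supp_def by auto
  ultimately show False using d by force
qed

lemma con_of_both:
  assumes A1: "T \<in> Slex r E C" and A2: "insert e T \<in> Slex r E C" and eT: "e \<notin> T"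
  shows "T \<in> Slex r (E - {e}) (conC e C)"
  unfolding Slex_def
proof (intro CollectI conjI ballI impI)
  show "T \<subseteq> E - {e}" using A1 eT unfolding Slex_def by auto
next
  fix X' assume X'C: "X' \<in> conC e C" and cf: "conf X' T"
  obtain X where X: "X \<in> C" "supp X \<noteq> {e}" "X' = (fst X - {e}, snd X - {e})"
    using X'C unfolding conC_def by blast
  have dX: "fst X \<inter> snd X = {}" using K_disj[OF K X(1)] .
  have sXE: "supp X \<subseteq> E" using K_supp[OF K X(1)] .
  have neX: "supp X \<noteq> {}" using K_ne[OF K X(1)] .
  show "goodr r X'"
  proof (cases "e \<in> fst X")
    case True
    have "conf X (insert e T)" using cf X(3) True dX unfolding conf_def by auto
    hence "goodr r X" using A2 X(1) unfolding Slex_def by blast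
    then obtain x where x: "x \<in> fst X" "\<forall>y\<in>snd X. r x < r y" unfolding goodr_def by blast
    show ?thesis
    proof (cases "x = e")
      case False thus ?thesis using x X(3) unfolding goodr_def by auto
    next
      case xe: True
      have "snd X = {}"
      proof (rule ccontr)
        assume "snd X \<noteq> {}"
        then obtain y where "y \<in> snd X" by blast
        moreover have "y \<in> E - {e}" using calculation sXE True dX unfolding supp_def by auto
        ultimately have "r e < r y" "r y < r e" using x xe emax by auto
        thus False by simp
      qed
      moreover obtain z where "z \<in> supp X" "z \<noteq> e" using X(2) neX by blast
      ultimately show ?thesis using X(3) unfolding goodr_def supp_def by auto
    qed
  next
    case False
    have "conf X T" using cf X(3) False eT unfolding conf_def by auto
    hence "goodr r X" using A1 X(1) unfolding Slex_def by blast
    then obtain x where x: "x \<in> fst X" "\<forall>y\<in>snd X. r x < r y" unfolding goodr_def by blast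
    thus ?thesis using False X(3) unfolding goodr_def by auto
  qed
qed

lemma both_of_con:
  assumes nl: "({}, {e}) \<notin> C" and TK: "T \<in> Slex r (E - {e}) (conC e C)"
  shows "T \<in> Slex r E C" "insert e T \<in> Slex r E C"
proof -
  have TE: "T \<subseteq> E - {e}" using TK unfolding Slex_def by blast
  have gK: "goodr r (fst X - {e}, snd X - {e})" if "X \<in> C" "supp X \<noteq> {e}" "conf (fst X - {e}, snd X - {e}) T" for X
  proof -
    have "(fst X - {e}, snd X - {e}) \<in> conC e C" using that(1,2) unfolding conC_def by blast
    thus ?thesis using TK that(3) unfolding Slex_def by blast
  qed
  show "T \<in> Slex r E C" unfolding Slex_def
  proof (intro CollectI conjI ballI impI)
    show "T \<subseteq> E" using TE by auto
  next
    fix X assume XC: "X \<in> C" and cf: "conf X T"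
    have sXE: "supp X \<subseteq> E" using K_supp[OF K XC] .
    show "goodr r X"
    proof (cases "supp X = {e}")
      case True
      hence "fst X = {}" using cf TE unfolding conf_def supp_def by auto
      hence "X = ({}, {e})" using True by (cases X) (auto simp: supp_def)
      thus ?thesis using nl XC by simp
    next
      case False
      have "conf (fst X - {e}, snd X - {e}) T" using cf unfolding conf_def by auto
      then obtain x where x: "x \<in> fst X - {e}" "\<forall>y\<in>snd X - {e}. r x < r y"
        using gK[OF XC False] unfolding goodr_def by auto
      have "x \<in> E - {e}" using x sXE unfolding supp_def by auto
      hence "r x < r e" using emax by blast
      thus ?thesis using x unfolding goodr_def by (intro bexI[of _ x]) auto
    qed
  qed
  show "insert e T \<in> Slex r E C" unfolding Slex_def
  proof (intro CollectI conjI ballI impI)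
    show "insert e T \<subseteq> E" using TE eE by auto
  next
    fix X assume XC: "X \<in> C" and cf: "conf X (insert e T)"
    have eS: "e \<notin> snd X" using cf unfolding conf_def by auto
    show "goodr r X"
    proof (cases "supp X = {e}")
      case True
      hence "snd X = {}" "e \<in> fst X" using eS unfolding supp_def by auto
      thus ?thesis unfolding goodr_def by auto
    next
      case False
      have "conf (fst X - {e}, snd X - {e}) T" using cf unfolding conf_def by auto
      then obtain x where x: "x \<in> fst X - {e}" "\<forall>y\<in>snd X - {e}. r x < r y"
        using gK[OF XC False] unfolding goodr_def by auto
      thus ?thesis using eS unfolding goodr_def by (intro bexI[of _ x]) auto
    qed
  qed
qed

end

context
  fixes E :: "'a set" and C :: "'a signed_set set" and r :: "'a \<Rightarrow> nat" and e :: 'a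
  assumes K: "Kcl E C" and inj: "inj_on r E" and eE: "e \<in> E" and emax: "\<forall>y\<in>E - {e}. r y < r e"
begin

lemma loop_mem: assumes "({}, {e}) \<in> C" "T \<in> Slex r E C" shows "e \<in> T"
proof (rule ccontr)
  assume "e \<notin> T"
  hence "conf ({}, {e}) T" unfolding conf_def by auto
  hence "goodr r ({}, {e})" using assms unfolding Slex_def by blast
  thus False unfolding goodr_def by simp
qed

lemma loop_ins:
  assumes L: "({}, {e}) \<in> C" and TD: "T \<in> Slex r (E - {e}) (delC e C)"
  shows "insert e T \<in> Slex r E C"
  unfolding Slex_def
proof (intro CollectI conjI ballI impI)
  have TE: "T \<subseteq> E - {e}" using TD unfolding Slex_def by blast
  thus "insert e T \<subseteq> E" using eE by auto
  have gD: "\<And>W. W \<in> C \<Longrightarrow> e \<notin> supp W \<Longrightarrow> conf W T \<Longrightarrow> goodr r W"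
    using TD unfolding Slex_def delC_def by blast
  fix X assume XC: "X \<in> C" and cf: "conf X (insert e T)"
  have eS: "e \<notin> snd X" using cf unfolding conf_def by auto
  have dX: "fst X \<inter> snd X = {}" using K_disj[OF K XC] .
  have sXE: "supp X \<subseteq> E" using K_supp[OF K XC] .
  show "goodr r X"
  proof (cases "e \<in> fst X")
    case False
    hence "e \<notin> supp X" "conf X T" using eS cf unfolding supp_def conf_def by auto
    thus ?thesis using gD XC by blast
  next
    case eF: True
    show ?thesis
    proof (cases "supp X = {e}")
      case True
      hence "snd X = {}" using eS unfolding supp_def by auto
      thus ?thesis using eF unfolding goodr_def by auto
    next
      case False
      define U where "U = supp X - {e}"
      have UE: "U \<subseteq> E - {e}" using sXE unfolding U_def by auto
      have finU: "finite U" using UE K_fin[OF K] finite_subset by blast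
      have Une: "U \<noteq> {}" using False eF unfolding U_def supp_def by auto
      obtain f where f: "f \<in> U" "\<forall>u\<in>U. r f \<le> r u" using ex_rmin[OF finU Une] by blast
      have gf: "goodf X ({}, {e}) f" using f dX unfolding goodf_def U_def supp_def by auto
      obtain W where W: "W \<in> C" "f \<in> supp W" "fst W \<subseteq> (fst X \<union> {}) - {e}" "snd W \<subseteq> (snd X \<union> {e}) - {e}"
        using K_elim[OF K XC L eF _ gf] by auto
      have "conf W T" using W cf unfolding conf_def by auto
      moreover have "e \<notin> supp W" using W by (auto simp: supp_def)
      ultimately have "goodr r W" using gD W(1) by blast
      then obtain x where x: "x \<in> fst W" "\<forall>y\<in>snd W. r x < r y" unfolding goodr_def by blast
      have fpos: "f \<in> fst X"
      proof (rule ccontr)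
        assume "f \<notin> fst X"
        hence "f \<in> snd W" using W(2,3) unfolding supp_def by auto
        hence "r x < r f" using x by blast
        moreover have "x \<in> U" using x W(3) unfolding U_def supp_def by auto
        ultimately show False using f by force
      qed
      have "\<forall>y\<in>snd X. r f < r y"
      proof
        fix y assume y: "y \<in> snd X"
        have yU: "y \<in> U" using y eS unfolding U_def supp_def by auto
        have "y \<noteq> f" using y fpos dX by auto
        moreover have "r f \<le> r y" using f yU by blast
        moreover have "r f \<noteq> r y" using inj calculation(1) yU f(1) UE unfolding inj_on_def by blast
        ultimately show "r f < r y" by simp
      qed
      thus ?thesis using fpos unfolding goodr_def by blast
    qed
  qed
qed

lemma card_loop:
  assumes L: "({}, {e}) \<in> C"
  shows "card (Slex r E C) = card (Slex r (E - {e}) (delC e C))"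
proof -
  have eq: "Slex r E C = insert e ` Slex r (E - {e}) (delC e C)"
  proof
    show "Slex r E C \<subseteq> insert e ` Slex r (E - {e}) (delC e C)"
    proof
      fix T assume T: "T \<in> Slex r E C"
      have "e \<in> T" using loop_mem[OF L T] .
      hence "T = insert e (T - {e})" by auto
      moreover have "T - {e} \<in> Slex r (E - {e}) (delC e C)" using del_sub[OF K inj eE emax T] .
      ultimately show "T \<in> insert e ` Slex r (E - {e}) (delC e C)" by blast
    qed
    show "insert e ` Slex r (E - {e}) (delC e C) \<subseteq> Slex r E C" using loop_ins[OF L] by blast
  qed
  have "inj_on (insert e) (Slex r (E - {e}) (delC e C))"
    unfolding inj_on_def Slex_def by blast
  thus ?thesis using eq by (simp add: card_image)
qed

lemma card_nonloop:
  assumes nl: "({}, {e}) \<notin> C"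
  shows "card (Slex r E C) = card (Slex r (E - {e}) (delC e C)) + card (Slex r (E - {e}) (conC e C))"
proof -
  define A where "A = Slex r E C"
  define D where "D = Slex r (E - {e}) (delC e C)"
  define Kc where "Kc = Slex r (E - {e}) (conC e C)"
  define A0 where "A0 = {T\<in>A. e \<notin> T}"
  define A1 where "A1 = {T\<in>A. e \<in> T}"
  define B1 where "B1 = (\<lambda>T. T - {e}) ` A1"
  have finA: "finite A" unfolding A_def Slex_def using K_fin[OF K]
    by (rule finite_subset[rotated, OF finite_Pow_iff[THEN iffD2]]) auto
  have c1: "card A = card A0 + card A1"
  proof -
    have "A = A0 \<union> A1" "A0 \<inter> A1 = {}" unfolding A0_def A1_def by auto
    thus ?thesis using finA card_Un_disjoint[of A0 A1] unfolding A0_def A1_def by auto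
  qed
  have c2: "card B1 = card A1"
    unfolding B1_def by (rule card_image) (auto simp: inj_on_def A1_def)
  have finB: "finite A0" "finite B1" using finA unfolding A0_def B1_def A1_def by auto
  have c3: "card A0 + card B1 = card (A0 \<union> B1) + card (A0 \<inter> B1)" using card_Un_Int[OF finB] .
  have u: "A0 \<union> B1 = D"
  proof
    show "A0 \<union> B1 \<subseteq> D"
    proof
      fix T assume "T \<in> A0 \<union> B1"
      then obtain T' where "T' \<in> A" "T = T' - {e}" unfolding A0_def B1_def A1_def by auto
      thus "T \<in> D" using del_sub[OF K inj eE emax] unfolding A_def D_def by blast
    qed
    show "D \<subseteq> A0 \<union> B1"
    proof
      fix T assume TD: "T \<in> D"
      have eT: "e \<notin> T" using TD unfolding D_def Slex_def by auto
      show "T \<in> A0 \<union> B1"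
      proof (cases "T \<in> A")
        case True thus ?thesis using eT unfolding A0_def by auto
      next
        case False
        hence "insert e T \<in> A" using ins_mem[OF K inj eE emax] TD unfolding A_def D_def by blast
        moreover have "T = insert e T - {e}" using eT by auto
        ultimately show ?thesis unfolding B1_def A1_def by blast
      qed
    qed
  qed
  have i: "A0 \<inter> B1 = Kc"
  proof
    show "A0 \<inter> B1 \<subseteq> Kc"
    proof
      fix T assume T: "T \<in> A0 \<inter> B1"
      then obtain T' where T': "T' \<in> A" "e \<in> T'" "T = T' - {e}" unfolding B1_def A1_def by auto
      have "T' = insert e T" using T' by auto
      moreover have "T \<in> A" "e \<notin> T" using T unfolding A0_def by auto
      ultimately show "T \<in> Kc" using con_of_both[OF K inj eE emax] T'(1) unfolding A_def Kc_def by blast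
    qed
    show "Kc \<subseteq> A0 \<inter> B1"
    proof
      fix T assume TK: "T \<in> Kc"
      have eT: "e \<notin> T" using TK unfolding Kc_def Slex_def by auto
      have "T \<in> A" "insert e T \<in> A" using both_of_con[OF K inj eE emax nl] TK unfolding A_def Kc_def by blast+
      moreover have "T = insert e T - {e}" using eT by auto
      ultimately show "T \<in> A0 \<inter> B1" using eT unfolding A0_def B1_def A1_def by blast
    qed
  qed
  show ?thesis using c1 c2 c3 u i unfolding A_def D_def Kc_def by simp
qed

end

definition cov :: "'a signed_set \<Rightarrow> 'a set \<Rightarrow> bool" where
  "cov Y T \<longleftrightarrow> (fst Y \<subseteq> T \<and> snd Y \<inter> T = {}) \<or> (snd Y \<subseteq> T \<and> fst Y \<inter> T = {})"

lemma sep_del: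
  assumes "M_separated_collection E C S"
  shows "M_separated_collection (E - {e}) (delC e C) ((\<lambda>T. T - {e}) ` S)"
  unfolding M_separated_collection_def
proof (intro conjI ballI)
  show "(\<lambda>T. T - {e}) ` S \<subseteq> Pow (E - {e})" using assms unfolding M_separated_collection_def by auto
next
  fix I J assume "I \<in> (\<lambda>T. T - {e}) ` S" "J \<in> (\<lambda>T. T - {e}) ` S"
  then obtain T1 T2 where T: "T1 \<in> S" "T2 \<in> S" "I = T1 - {e}" "J = T2 - {e}" by blast
  have s: "M_separated C T1 T2" using assms T unfolding M_separated_collection_def by blast
  show "M_separated (delC e C) I J" unfolding M_separated_def
  proof
    assume "\<exists>X\<in>delC e C. fst X \<subseteq> I - J \<and> snd X \<subseteq> J - I"
    then obtain X where X: "X \<in> C" "e \<notin> supp X" "fst X \<subseteq> I - J" "snd X \<subseteq> J - I" unfolding delC_def by blast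
    have "fst X \<subseteq> T1 - T2" "snd X \<subseteq> T2 - T1" using X T unfolding supp_def by auto
    thus False using s X(1) unfolding M_separated_def by blast
  qed
qed

lemma sep_con:
  assumes "M_separated_collection E C S" and dis: "\<forall>X\<in>C. fst X \<inter> snd X = {}"
  shows "M_separated_collection (E - {e}) (conC e C) {T. T \<in> S \<and> e \<notin> T \<and> insert e T \<in> S}"
  unfolding M_separated_collection_def
proof (intro conjI ballI)
  show "{T. T \<in> S \<and> e \<notin> T \<and> insert e T \<in> S} \<subseteq> Pow (E - {e})"
    using assms unfolding M_separated_collection_def by auto
next
  fix I J assume I: "I \<in> {T. T \<in> S \<and> e \<notin> T \<and> insert e T \<in> S}" and J: "J \<in> {T. T \<in> S \<and> e \<notin> T \<and> insert e T \<in> S}"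
  have sep: "\<And>I J. I \<in> S \<Longrightarrow> J \<in> S \<Longrightarrow> M_separated C I J" using assms unfolding M_separated_collection_def by blast
  show "M_separated (conC e C) I J" unfolding M_separated_def
  proof
    assume "\<exists>X'\<in>conC e C. fst X' \<subseteq> I - J \<and> snd X' \<subseteq> J - I"
    then obtain X' where X': "X' \<in> conC e C" "fst X' \<subseteq> I - J" "snd X' \<subseteq> J - I" by blast
    then obtain X where X0: "X \<in> C" "X' = (fst X - {e}, snd X - {e})" unfolding conC_def by blast
    have X: "X \<in> C" "fst X - {e} \<subseteq> I - J" "snd X - {e} \<subseteq> J - I" using X0 X' by auto
    show False
    proof (cases "e \<in> fst X")
      case True
      have "e \<notin> snd X" using dis X(1) True by blast
      hence "fst X \<subseteq> insert e I - J" "snd X \<subseteq> J - insert e I" using X True I J by auto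
      hence "\<not> M_separated C (insert e I) J" using X(1) unfolding M_separated_def by blast
      thus False using sep I J by blast
    next
      case F1: False
      show False
      proof (cases "e \<in> snd X")
        case True
        have "fst X \<subseteq> I - insert e J" "snd X \<subseteq> insert e J - I" using X True F1 I J by auto
        hence "\<not> M_separated C I (insert e J)" using X(1) unfolding M_separated_def by blast
        thus False using sep I J by blast
      next
        case False
        have "fst X \<subseteq> I - J" "snd X \<subseteq> J - I" using X False F1 by auto
        hence "\<not> M_separated C I J" using X(1) unfolding M_separated_def by blast
        thus False using sep I J by blast
      qed
    qed
  qed
qed

lemma loop_agree:
  assumes L: "({e}, {}) \<in> C" and S: "M_separated_collection E C S"
  shows "inj_on (\<lambda>T. T - {e}) S"
proof (rule inj_onI)
  fix T1 T2 assume T: "T1 \<in> S" "T2 \<in> S" "T1 - {e} = T2 - {e}"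
  have s: "M_separated C T1 T2" "M_separated C T2 T1" using S T unfolding M_separated_collection_def by blast+
  have "e \<in> T1 \<longleftrightarrow> e \<in> T2"
  proof
    assume "e \<in> T1" show "e \<in> T2"
    proof (rule ccontr)
      assume "e \<notin> T2"
      hence "fst ({e}, {}::'a set) \<subseteq> T1 - T2" "snd ({e}, {}::'a set) \<subseteq> T2 - T1" using \<open>e \<in> T1\<close> by auto
      thus False using s(1) L unfolding M_separated_def by blast
    qed
  next
    assume "e \<in> T2" show "e \<in> T1"
    proof (rule ccontr)
      assume "e \<notin> T1"
      hence "fst ({e}, {}::'a set) \<subseteq> T2 - T1" "snd ({e}, {}::'a set) \<subseteq> T1 - T2" using \<open>e \<in> T2\<close> by auto
      thus False using s(2) L unfolding M_separated_def by blast
    qed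
  qed
  thus "T1 = T2" using T(3) by blast
qed

lemma card_split:
  assumes fin: "finite S"
  shows "card S = card ((\<lambda>T. T - {e}) ` S) + card {T. T \<in> S \<and> e \<notin> T \<and> insert e T \<in> S}"
proof -
  define S0 where "S0 = {T\<in>S. e \<notin> T}"
  define S1' where "S1' = {T\<in>S. e \<in> T}"
  define S1 where "S1 = (\<lambda>T. T - {e}) ` S1'"
  have c1: "card S = card S0 + card S1'"
  proof -
    have "S = S0 \<union> S1'" "S0 \<inter> S1' = {}" unfolding S0_def S1'_def by auto
    thus ?thesis using fin card_Un_disjoint[of S0 S1'] unfolding S0_def S1'_def by auto
  qed
  have c2: "card S1 = card S1'" unfolding S1_def by (rule card_image) (auto simp: inj_on_def S1'_def)
  have finB: "finite S0" "finite S1" using fin unfolding S0_def S1_def S1'_def by auto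
  have c3: "card S0 + card S1 = card (S0 \<union> S1) + card (S0 \<inter> S1)" using card_Un_Int[OF finB] .
  have u: "S0 \<union> S1 = (\<lambda>T. T - {e}) ` S"
  proof
    show "S0 \<union> S1 \<subseteq> (\<lambda>T. T - {e}) ` S"
    proof
      fix T assume "T \<in> S0 \<union> S1"
      thus "T \<in> (\<lambda>T. T - {e}) ` S"
      proof
        assume "T \<in> S0" hence "T \<in> S" "T = T - {e}" unfolding S0_def by auto
        thus ?thesis by blast
      next
        assume "T \<in> S1" thus ?thesis unfolding S1_def S1'_def by auto
      qed
    qed
    show "(\<lambda>T. T - {e}) ` S \<subseteq> S0 \<union> S1"
    proof
      fix T assume "T \<in> (\<lambda>T. T - {e}) ` S"
      then obtain T' where T': "T' \<in> S" "T = T' - {e}" by blast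
      show "T \<in> S0 \<union> S1"
      proof (cases "e \<in> T'")
        case True thus ?thesis using T' unfolding S1_def S1'_def by blast
      next
        case False hence "T = T'" using T' by auto
        thus ?thesis using T' False unfolding S0_def by blast
      qed
    qed
  qed
  have i: "S0 \<inter> S1 = {T. T \<in> S \<and> e \<notin> T \<and> insert e T \<in> S}"
  proof
    show "S0 \<inter> S1 \<subseteq> {T. T \<in> S \<and> e \<notin> T \<and> insert e T \<in> S}"
    proof
      fix T assume T: "T \<in> S0 \<inter> S1"
      then obtain T' where T': "T' \<in> S" "e \<in> T'" "T = T' - {e}" unfolding S1_def S1'_def by auto
      have "insert e T = T'" using T' by auto
      thus "T \<in> {T. T \<in> S \<and> e \<notin> T \<and> insert e T \<in> S}" using T T' unfolding S0_def by auto
    qed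
    show "{T. T \<in> S \<and> e \<notin> T \<and> insert e T \<in> S} \<subseteq> S0 \<inter> S1"
    proof
      fix T assume T: "T \<in> {T. T \<in> S \<and> e \<notin> T \<and> insert e T \<in> S}"
      hence "T = insert e T - {e}" by auto
      hence "T \<in> S1" using T unfolding S1_def S1'_def by blast
      thus "T \<in> S0 \<inter> S1" using T unfolding S0_def by auto
    qed
  qed
  show ?thesis using c1 c2 c3 u i by simp
qed

lemma choose_e:
  assumes "finite E" "E \<noteq> {}" "inj_on (r::'a \<Rightarrow> nat) E"
  obtains e where "e \<in> E" "\<forall>y\<in>E - {e}. r y < r e"
proof -
  have "Max (r ` E) \<in> r ` E" using assms by simp
  then obtain e where e: "e \<in> E" "r e = Max (r ` E)" by auto
  have "\<forall>y\<in>E - {e}. r y < r e"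
  proof
    fix y assume y: "y \<in> E - {e}"
    have "r y \<le> r e" using e assms(1) y by simp
    moreover have "r y \<noteq> r e" using assms(3) y e(1) unfolding inj_on_def by blast
    ultimately show "r y < r e" by simp
  qed
  thus ?thesis using that e(1) by blast
qed

lemma sep_fin: "M_separated_collection E C S \<Longrightarrow> finite E \<Longrightarrow> finite S"
  unfolding M_separated_collection_def by (meson finite_Pow_iff finite_subset)

lemma UB:
  "\<forall>E C S. Kcl E C \<longrightarrow> inj_on r E \<longrightarrow> card E = n \<longrightarrow> M_separated_collection E C S \<longrightarrow> card S \<le> card (Slex r E C)"
proof (induction n)
  case 0
  show ?case
  proof (intro allI impI)
    fix E C S assume K: "Kcl E (C::'a signed_set set)" and i: "inj_on r E" and c: "card E = 0"
      and S: "M_separated_collection E C S"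
    have E: "E = {}" using c K_fin[OF K] by simp
    have C: "C = {}" using K_supp[OF K] K_ne[OF K] E by blast
    have "Slex r E C = {{}}" unfolding Slex_def using E C by auto
    moreover have "S \<subseteq> {{}}" using S E unfolding M_separated_collection_def by auto
    ultimately show "card S \<le> card (Slex r E C)" using card_mono[of "{{}}" S] by simp
  qed
next
  case (Suc n)
  show ?case
  proof (intro allI impI)
    fix E C S assume K: "Kcl E (C::'a signed_set set)" and i: "inj_on r E" and c: "card E = Suc n"
      and S: "M_separated_collection E C S"
    have fin: "finite E" using K_fin[OF K] .
    have "E \<noteq> {}" using c by auto
    then obtain e where eE: "e \<in> E" and emax: "\<forall>y\<in>E - {e}. r y < r e" using choose_e fin i by blast
    have c': "card (E - {e}) = n" using c eE fin by simp
    have i': "inj_on r (E - {e})" using i by (rule inj_on_subset) auto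
    have finS: "finite S" using sep_fin[OF S fin] .
    have dC: "\<forall>X\<in>C. fst X \<inter> snd X = {}" using K_disj[OF K] by blast
    have IHd: "card ((\<lambda>T. T - {e}) ` S) \<le> card (Slex r (E - {e}) (delC e C))"
      using Suc.IH K_del[OF K] i' c' sep_del[OF S] by blast
    show "card S \<le> card (Slex r E C)"
    proof (cases "({}, {e}) \<in> C")
      case True
      have "({e}, {}) \<in> C" using K_neg[OF K True] by (simp add: neg_sset_def)
      hence "card S = card ((\<lambda>T. T - {e}) ` S)" using card_image[OF loop_agree[OF _ S]] by simp
      thus ?thesis using IHd card_loop[OF K i eE emax True] by simp
    next
      case False
      have IHc: "card {T. T \<in> S \<and> e \<notin> T \<and> insert e T \<in> S} \<le> card (Slex r (E - {e}) (conC e C))"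
        using Suc.IH K_con[OF K] i' c' sep_con[OF S dC] by blast
      show ?thesis using IHd IHc card_split[OF finS, of e] card_nonloop[OF K i eE emax False] by simp
    qed
  qed
qed

lemma Slex_pos: assumes K: "Kcl E C" and i: "inj_on r E" shows "1 \<le> card (Slex r E C)"
proof -
  have "M_separated_collection E C {{}}"
    unfolding M_separated_collection_def M_separated_def using K_ne[OF K] by (auto simp: supp_def)
  thus ?thesis using UB K i by fastforce
qed

lemma cov_del: "e \<notin> supp Y \<Longrightarrow> cov Y (T - {e}) \<Longrightarrow> cov Y T"
  unfolding cov_def supp_def by auto

lemma cov_single: assumes "supp Y = {e}" "fst Y \<inter> snd Y = {}" shows "cov Y T"
proof -
  have "(fst Y = {e} \<and> snd Y = {}) \<or> (fst Y = {} \<and> snd Y = {e})"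
    using assms unfolding supp_def Un_singleton_iff by auto
  thus ?thesis unfolding cov_def by (cases "e \<in> T") auto
qed

lemma ST:
  "\<forall>E C S Y. Kcl E C \<longrightarrow> inj_on r E \<longrightarrow> card E = n \<longrightarrow> M_separated_collection E C S \<longrightarrow> Y \<in> C
     \<longrightarrow> (\<forall>X\<in>C. \<not> supp X \<subset> supp Y) \<longrightarrow> (\<forall>T\<in>S. \<not> cov Y T) \<longrightarrow> card S < card (Slex r E C)"
proof (induction n)
  case 0
  show ?case
  proof (intro allI impI)
    fix E C S Y assume K: "Kcl E (C::'a signed_set set)" and c: "card E = 0" and Y: "Y \<in> C"
    have E: "E = {}" using c K_fin[OF K] by simp
    show "card S < card (Slex r E C)" using K_supp[OF K Y] K_ne[OF K Y] E by blast
  qed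
next
  case (Suc n)
  show ?case
  proof (intro allI impI)
    fix E C S Y assume K: "Kcl E (C::'a signed_set set)" and i: "inj_on r E" and c: "card E = Suc n"
      and S: "M_separated_collection E C S" and YC: "Y \<in> C" and Ymin: "\<forall>X\<in>C. \<not> supp X \<subset> supp Y"
      and unc: "\<forall>T\<in>S. \<not> cov Y T"
    have fin: "finite E" using K_fin[OF K] .
    have "E \<noteq> {}" using c by auto
    then obtain e where eE: "e \<in> E" and emax: "\<forall>y\<in>E - {e}. r y < r e" using choose_e fin i by blast
    have c': "card (E - {e}) = n" using c eE fin by simp
    have i': "inj_on r (E - {e})" using i by (rule inj_on_subset) auto
    have finS: "finite S" using sep_fin[OF S fin] .
    have dC: "\<forall>X\<in>C. fst X \<inter> snd X = {}" using K_disj[OF K] by blast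
    let ?S' = "(\<lambda>T. T - {e}) ` S"
    let ?Sc = "{T. T \<in> S \<and> e \<notin> T \<and> insert e T \<in> S}"
    have UBd: "card ?S' \<le> card (Slex r (E - {e}) (delC e C))"
      using UB K_del[OF K] i' c' sep_del[OF S] by blast
    have delcase: "card ?S' < card (Slex r (E - {e}) (delC e C))" if eY: "e \<notin> supp Y"
    proof -
      have "Y \<in> delC e C" using YC eY unfolding delC_def by blast
      moreover have "\<forall>X\<in>delC e C. \<not> supp X \<subset> supp Y" using Ymin unfolding delC_def by blast
      moreover have "\<forall>T\<in>?S'. \<not> cov Y T" using unc cov_del[OF eY] by blast
      ultimately show ?thesis using Suc.IH K_del[OF K] i' c' sep_del[OF S] by blast
    qed
    show "card S < card (Slex r E C)"
    proof (cases "({}, {e}) \<in> C")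
      case True
      have "({e}, {}) \<in> C" using K_neg[OF K True] by (simp add: neg_sset_def)
      hence cS: "card S = card ?S'" using card_image[OF loop_agree[OF _ S]] by simp
      have cA: "card (Slex r E C) = card (Slex r (E - {e}) (delC e C))" using card_loop[OF K i eE emax True] .
      show ?thesis
      proof (cases "e \<in> supp Y")
        case False thus ?thesis using delcase cS cA by simp
      next
        case eY: True
        have "\<not> supp ({}, {e}) \<subset> supp Y" using Ymin True by blast
        hence sY: "supp Y = {e}" using eY by (auto simp: supp_def)
        have "S = {}" using unc cov_single[OF sY K_disj[OF K YC]] by blast
        thus ?thesis using Slex_pos[OF K i] by simp
      qed
    next
      case nl: False
      have UBc: "card ?Sc \<le> card (Slex r (E - {e}) (conC e C))"
        using UB K_con[OF K] i' c' sep_con[OF S dC] by blast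
      have split: "card S = card ?S' + card ?Sc" using card_split[OF finS] .
      have cA: "card (Slex r E C) = card (Slex r (E - {e}) (delC e C)) + card (Slex r (E - {e}) (conC e C))"
        using card_nonloop[OF K i eE emax nl] .
      show ?thesis
      proof (cases "e \<in> supp Y")
        case False thus ?thesis using delcase UBc split cA by simp
      next
        case eY: True
        have dY: "fst Y \<inter> snd Y = {}" using K_disj[OF K YC] .
        have sYe: "supp Y \<noteq> {e}"
        proof
          assume sY: "supp Y = {e}"
          show False
          proof (cases "e \<in> fst Y")
            case True
            hence "Y = ({e}, {})" using sY dY by (cases Y) (auto simp: supp_def)
            hence "({}, {e}) \<in> C" using K_neg[OF K YC] by (simp add: neg_sset_def)
            thus False using nl by simp
          next
            case False
            hence "Y = ({}, {e})" using sY dY by (cases Y) (auto simp: supp_def)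
            thus False using nl YC by simp
          qed
        qed
        define Y' where "Y' = (fst Y - {e}, snd Y - {e})"
        have Y'C: "Y' \<in> conC e C" using YC sYe unfolding Y'_def conC_def by blast
        have Y'min: "\<forall>X'\<in>conC e C. \<not> supp X' \<subset> supp Y'"
        proof
          fix X' assume "X' \<in> conC e C"
          then obtain X where X: "X \<in> C" "supp X \<noteq> {e}" "X' = (fst X - {e}, snd X - {e})" unfolding conC_def by blast
          show "\<not> supp X' \<subset> supp Y'"
          proof
            assume a: "supp X' \<subset> supp Y'"
            have "supp X \<subset> supp Y" using a eY X(3) unfolding Y'_def supp_def by auto
            thus False using Ymin X(1) by blast
          qed
        qed
        have Y'unc: "\<forall>T\<in>?Sc. \<not> cov Y' T"
        proof
          fix T assume T: "T \<in> ?Sc"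
          show "\<not> cov Y' T"
          proof
            assume cv: "cov Y' T"
            have "cov Y T \<or> cov Y (insert e T)" using cv T eY dY unfolding cov_def Y'_def supp_def by auto
            thus False using unc T by blast
          qed
        qed
        have "card ?Sc < card (Slex r (E - {e}) (conC e C))"
          using Suc.IH K_con[OF K] i' c' sep_con[OF S dC] Y'C Y'min Y'unc by blast
        thus ?thesis using UBd split cA by simp
      qed
    qed
  qed
qed

theorem corollary7p12:
  assumes "oriented_matroid E C"
    and "max_by_size_separated E C S"
  shows "\<forall>Y\<in>C. \<exists>T\<in>S. (fst Y \<subseteq> T \<and> snd Y \<inter> T = {}) \<or> (snd Y \<subseteq> T \<and> fst Y \<inter> T = {})"
proof
  fix Y assume YC: "Y \<in> C"
  have K: "Kcl E C" using OM_K[OF assms(1)] .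
  obtain r :: "'a \<Rightarrow> nat" and n where "r ` E = {i. i < n}" "inj_on r E"
    using finite_imp_inj_to_nat_seg[OF K_fin[OF K]] by blast
  hence inj: "inj_on r E" by blast
  have S: "M_separated_collection E C S" using assms(2) unfolding max_by_size_separated_def by blast
  have "card (Slex r E C) \<le> card S"
    using assms(2) Slex_sep[OF K] unfolding max_by_size_separated_def by blast
  have Ymin: "\<forall>X\<in>C. \<not> supp X \<subset> supp Y"
  proof
    fix X assume XC: "X \<in> C"
    show "\<not> supp X \<subset> supp Y"
    proof
      assume a: "supp X \<subset> supp Y"
      hence "X = Y \<or> X = neg_sset Y" using om_inc[OF assms(1) XC YC] by blast
      thus False using a by auto
    qed
  qed
  show "\<exists>T\<in>S. (fst Y \<subseteq> T \<and> snd Y \<inter> T = {}) \<or> (snd Y \<subseteq> T \<and> fst Y \<inter> T = {})"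
  proof (rule ccontr)
    assume "\<not> ?thesis"
    hence "\<forall>T\<in>S. \<not> cov Y T" unfolding cov_def by blast
    hence "card S < card (Slex r E C)" using ST K inj S YC Ymin by blast
    thus False using \<open>card (Slex r E C) \<le> card S\<close> by simp
  qed
qed

end
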